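(* Let $n>2$ and $q>0$ be integers such that $n$ is even or $q$ is odd. Then for every prime $p>\max\{n,(q-1)n+1\}$, $$ \sum_{k=0}^{p-1}\frac{(q-\frac{p}{n})_k^n}{(1)_k^n}\equiv0\pmod{p^3}. $$
   Context: $(x)_k$ denotes the Pochhammer symbol: $(x)_0=1$ and $(x)_k=x(x+1)\cdots(x+k-1)$ for $k>0$. A congruence between rational numbers modulo $p^m$ means their difference lies in $p^m\mathbb{Z}_{(p)}$, where $\mathbb{Z}_{(p)}$ is the ring of rationals whose denominators are coprime to $p$. *)

theory Defs
  imports Complex_Main "HOL-Computational_Algebra.Primes"
begin

text \<open>Congruence of rationals modulo p^m: the difference lies in p^m Z_(p),
  i.e. it can be written a/b with integers a, b, where p does not divide b and p^m divides a.\<close>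
definition rat_cong_pow :: "rat \<Rightarrow> rat \<Rightarrow> int \<Rightarrow> nat \<Rightarrow> bool" where
  "rat_cong_pow x y p m \<longleftrightarrow>
     (\<exists>a b :: int. b \<noteq> 0 \<and> \<not> p dvd b \<and> p ^ m dvd a \<and> x - y = of_int a / of_int b)"

end

theory Submission
  imports Defs "HOL-Computational_Algebra.Polynomial"
begin

definition pint :: "nat \<Rightarrow> rat \<Rightarrow> bool" where
  "pint p x \<longleftrightarrow> (\<exists>a b :: int. b \<noteq> 0 \<and> \<not> int p dvd b \<and> x = of_int a / of_int b)"

definition pm :: "nat \<Rightarrow> nat \<Rightarrow> rat \<Rightarrow> bool" where
  "pm p k x \<longleftrightarrow> pint p (x / of_nat p ^ k)"

locale pl =
  fixes p :: nat
  assumes prime_p: "prime p"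
begin

lemma p_pos: "p > 0" using prime_p prime_gt_0_nat by blast
lemma prime_int: "prime (int p)" using prime_p by simp

lemma pint_int[simp]: "pint p (of_int a)"
proof -
  have "\<not> int p dvd 1" using prime_int by (meson not_prime_unit)
  then show ?thesis unfolding pint_def by (rule_tac x=a in exI, rule_tac x=1 in exI) simp
qed

lemma pint_nat[simp]: "pint p (of_nat a)"
  using pint_int[of "int a"] by simp

lemma pint_0[simp]: "pint p 0" using pint_int[of 0] by (simp del: pint_int)
lemma pint_1[simp]: "pint p 1" using pint_int[of 1] by (simp del: pint_int)
lemma pint_numeral[simp]: "pint p (numeral k)" by (metis pint_int of_int_numeral)

lemma pint_add[intro]: "pint p x \<Longrightarrow> pint p y \<Longrightarrow> pint p (x + y)"
proof -
  assume "pint p x" "pint p y"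
  then obtain a b c d :: int where h: "b \<noteq> 0" "\<not> int p dvd b" "x = of_int a / of_int b"
     "d \<noteq> 0" "\<not> int p dvd d" "y = of_int c / of_int d" unfolding pint_def by blast
  have "x + y = of_int (a*d + c*b) / of_int (b*d)" using h by (simp add: field_simps)
  moreover have "\<not> int p dvd b*d" using h prime_int by (simp add: prime_dvd_mult_iff)
  moreover have "b*d \<noteq> 0" using h by simp
  ultimately show ?thesis unfolding pint_def by blast
qed

lemma pint_mult[intro]: "pint p x \<Longrightarrow> pint p y \<Longrightarrow> pint p (x * y)"
proof -
  assume "pint p x" "pint p y"
  then obtain a b c d :: int where h: "b \<noteq> 0" "\<not> int p dvd b" "x = of_int a / of_int b"
     "d \<noteq> 0" "\<not> int p dvd d" "y = of_int c / of_int d" unfolding pint_def by blast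
  have "x * y = of_int (a*c) / of_int (b*d)" using h by (simp add: field_simps)
  moreover have "\<not> int p dvd b*d" using h prime_int by (simp add: prime_dvd_mult_iff)
  moreover have "b*d \<noteq> 0" using h by simp
  ultimately show ?thesis unfolding pint_def by blast
qed

lemma pint_uminus[intro]: "pint p x \<Longrightarrow> pint p (- x)"
  using pint_mult[of "-1" x] pint_int[of "-1"] by simp

lemma pint_diff[intro]: "pint p x \<Longrightarrow> pint p y \<Longrightarrow> pint p (x - y)"
  using pint_add[of x "-y"] pint_uminus[of y] by simp

lemma pint_div_int: "\<not> int p dvd b \<Longrightarrow> pint p (of_int a / of_int b)"
  unfolding pint_def by (rule_tac x=a in exI, rule_tac x=b in exI) auto

lemma pint_div_nat: "\<not> p dvd b \<Longrightarrow> pint p (of_nat a / of_nat b)"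
  using pint_div_int[of "int b" "int a"] by simp

lemma pint_inv_nat: "\<not> p dvd b \<Longrightarrow> pint p (1 / of_nat b)"
  using pint_div_nat[of b 1] by simp

lemma pint_sum[intro]: "(\<And>i. i \<in> A \<Longrightarrow> pint p (f i)) \<Longrightarrow> pint p (sum f A)"
  by (induction A rule: infinite_finite_induct) auto

lemma pint_prod[intro]: "(\<And>i. i \<in> A \<Longrightarrow> pint p (f i)) \<Longrightarrow> pint p (prod f A)"
  by (induction A rule: infinite_finite_induct) auto

lemma pint_power[intro]: "pint p x \<Longrightarrow> pint p (x ^ k)"
  by (induction k) auto

lemma pm_iff: "pm p k x \<longleftrightarrow> (\<exists>y. pint p y \<and> x = of_nat p ^ k * y)"
  unfolding pm_def using p_pos by (auto simp: field_simps)

lemma pm_intro: "pint p y \<Longrightarrow> pm p k (of_nat p ^ k * y)"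
  using pm_iff by blast

lemma pm_0[simp]: "pm p k 0" using pm_intro[of 0 k] by simp

lemma pm_zero_iff: "pm p 0 x \<longleftrightarrow> pint p x" unfolding pm_def by simp

lemma pm_add[intro]: "pm p k x \<Longrightarrow> pm p k y \<Longrightarrow> pm p k (x + y)"
  unfolding pm_def by (simp add: add_divide_distrib pint_add)

lemma pm_uminus[intro]: "pm p k x \<Longrightarrow> pm p k (- x)"
  unfolding pm_def using pint_uminus by (simp add: minus_divide_left[symmetric])

lemma pm_diff[intro]: "pm p k x \<Longrightarrow> pm p k y \<Longrightarrow> pm p k (x - y)"
  unfolding pm_def by (simp add: diff_divide_distrib pint_diff)

lemma pm_sum[intro]: "(\<And>i. i \<in> A \<Longrightarrow> pm p k (f i)) \<Longrightarrow> pm p k (sum f A)"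
  by (induction A rule: infinite_finite_induct) auto

lemma pm_mult_pint[intro]: "pm p k x \<Longrightarrow> pint p y \<Longrightarrow> pm p k (x * y)"
proof -
  assume "pm p k x" "pint p y"
  then obtain z where "pint p z" "x = of_nat p ^ k * z" unfolding pm_iff by blast
  then have "x * y = of_nat p ^ k * (z * y)" by simp
  then show ?thesis unfolding pm_iff using \<open>pint p z\<close> \<open>pint p y\<close> by blast
qed

lemma pm_pint_mult[intro]: "pint p y \<Longrightarrow> pm p k x \<Longrightarrow> pm p k (y * x)"
  using pm_mult_pint by (simp add: mult.commute)

lemma pm_mult[intro]: "pm p a x \<Longrightarrow> pm p b y \<Longrightarrow> pm p (a + b) (x * y)"
proof -
  assume "pm p a x" "pm p b y"
  then obtain z w where "pint p z" "x = of_nat p ^ a * z" "pint p w" "y = of_nat p ^ b * w" unfolding pm_iff by blast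
  then have "x * y = of_nat p ^ (a + b) * (z * w)" by (simp add: power_add)
  then show ?thesis unfolding pm_iff using \<open>pint p z\<close> \<open>pint p w\<close> by blast
qed

lemma pm_mono: "j \<le> k \<Longrightarrow> pm p k x \<Longrightarrow> pm p j x"
proof -
  assume "j \<le> k" "pm p k x"
  then obtain y where "pint p y" "x = of_nat p ^ k * y" unfolding pm_iff by blast
  have "(of_nat p ^ k :: rat) = of_nat p ^ j * of_nat p ^ (k - j)"
    using \<open>j \<le> k\<close> by (metis le_add_diff_inverse power_add)
  then have "x = of_nat p ^ j * (of_nat p ^ (k - j) * y)"
    using \<open>x = _\<close> by simp
  moreover have "pint p (of_nat p ^ (k - j) * y)" using \<open>pint p y\<close> by (intro pint_mult pint_power pint_nat)
  ultimately show ?thesis unfolding pm_iff by blast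
qed

lemma pm_pint: "pm p k x \<Longrightarrow> pint p x"
  using pm_mono[of 0 k x] pm_zero_iff by simp

lemma pm_power: "pm p 1 x \<Longrightarrow> pm p j (x ^ j)"
proof (induction j)
  case 0 then show ?case by (simp add: pm_zero_iff)
next
  case (Suc j)
  then have "pm p (1 + j) (x * x ^ j)" using pm_mult by blast
  then show ?case by simp
qed

lemma pm_p: "pm p 1 (of_nat p)" using pm_intro[of 1 1] by simp

end


context pl
begin

lemma binom_aux: "((a::int) + 1) ^ N = (\<Sum>r\<le>N. of_nat (N choose r) * a ^ r)"
  by (simp add: binomial_ring)

lemma power_sum_dvd: "j < p - 1 \<Longrightarrow> int p dvd (\<Sum>i<p. int i ^ j)"
proof (induction j rule: less_induct)
  case (less j)
  define S where "S r = (\<Sum>i<p. int i ^ r)" for r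
  have tel: "(\<Sum>i<p. int (Suc i) ^ Suc j - int i ^ Suc j) = int p ^ Suc j"
    using sum_lessThan_telescope[of "\<lambda>i. int i ^ Suc j" p] by simp
  have bin: "int (Suc i) ^ Suc j - int i ^ Suc j = (\<Sum>r<Suc j. of_nat (Suc j choose r) * int i ^ r)" for i
  proof -
    have "int (Suc i) ^ Suc j = (int i + 1) ^ Suc j" by (simp add: add.commute)
    also have "\<dots> = (\<Sum>r\<le>Suc j. of_nat (Suc j choose r) * int i ^ r)"
      using binom_aux[of "int i" "Suc j"] .
    also have "\<dots> = (\<Sum>r<Suc j. of_nat (Suc j choose r) * int i ^ r) + int i ^ Suc j"
      by (simp only: sum.atMost_Suc lessThan_Suc_atMost[symmetric] binomial_n_n) simp
    finally show ?thesis by simp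
  qed
  have "(\<Sum>r<Suc j. of_nat (Suc j choose r) * S r) = (\<Sum>r<Suc j. \<Sum>i<p. of_nat (Suc j choose r) * int i ^ r)"
    unfolding S_def by (simp add: sum_distrib_left)
  also have "\<dots> = (\<Sum>i<p. \<Sum>r<Suc j. of_nat (Suc j choose r) * int i ^ r)"
    by (rule sum.swap)
  also have "\<dots> = int p ^ Suc j" using tel bin by simp
  finally have key: "(\<Sum>r<Suc j. of_nat (Suc j choose r) * S r) = int p ^ Suc j" .
  have "int (Suc j) * S j = int p ^ Suc j - (\<Sum>r<j. of_nat (Suc j choose r) * S r)"
    using key by simp
  moreover have "int p dvd (\<Sum>r<j. of_nat (Suc j choose r) * S r)"
    using less by (intro dvd_sum) (auto simp: S_def)
  moreover have "int p dvd int p ^ Suc j" by simp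
  ultimately have "int p dvd int (Suc j) * S j" by (metis dvd_diff)
  moreover have "\<not> int p dvd int (Suc j)"
  proof
    assume "int p dvd int (Suc j)"
    then have "p dvd Suc j" by (metis of_nat_dvd_iff)
    then have "p \<le> Suc j" by (intro dvd_imp_le) auto
    then show False using less.prems by linarith
  qed
  ultimately have "int p dvd S j" using prime_int prime_dvd_mult_iff by blast
  then show ?case by (simp add: S_def)
qed

lemma power_sum_pm: "j < p - 1 \<Longrightarrow> pm p 1 (\<Sum>i<p. (of_nat i :: rat) ^ j)"
proof -
  assume "j < p - 1"
  then obtain t where t: "(\<Sum>i<p. int i ^ j) = int p * t" using power_sum_dvd by blast
  have "(\<Sum>i<p. (of_nat i :: rat) ^ j) = of_int (\<Sum>i<p. int i ^ j)" by simp
  also have "\<dots> = of_nat p ^ 1 * of_int t" using t by simp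
  finally show ?thesis using pm_intro[of "of_int t" 1] by simp
qed

definition ppoly :: "rat poly \<Rightarrow> bool" where
  "ppoly Q \<longleftrightarrow> (\<forall>k. pint p (coeff Q k))"

lemma poly_sum_pm:
  assumes "ppoly Q" "degree Q < p - 1"
  shows "pm p 1 (\<Sum>m<p. poly Q (of_nat m))"
proof -
  have "(\<Sum>m<p. poly Q (of_nat m)) = (\<Sum>m<p. \<Sum>k\<le>degree Q. coeff Q k * of_nat m ^ k)"
    by (simp add: poly_altdef)
  also have "\<dots> = (\<Sum>k\<le>degree Q. coeff Q k * (\<Sum>m<p. of_nat m ^ k))"
    by (subst sum.swap) (simp add: sum_distrib_left)
  finally have eq: "(\<Sum>m<p. poly Q (of_nat m)) = (\<Sum>k\<le>degree Q. coeff Q k * (\<Sum>m<p. of_nat m ^ k))" .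
  show ?thesis unfolding eq
  proof (intro pm_sum)
    fix k assume "k \<in> {..degree Q}"
    then have "k < p - 1" using assms by auto
    then show "pm p 1 (coeff Q k * (\<Sum>m<p. of_nat m ^ k))"
      using power_sum_pm assms(1) ppoly_def by (intro pm_pint_mult) auto
  qed
qed

end

lemma binom_aux': "((a::'a::comm_ring_1) + 1) ^ N = (\<Sum>r\<le>N. of_nat (N choose r) * a ^ r)"
  by (simp add: binomial_ring)

lemma binom_diff: "((a::'a::comm_ring_1) + 1) ^ Suc j - a ^ Suc j = (\<Sum>r<Suc j. of_nat (Suc j choose r) * a ^ r)"
proof -
  have "(a + 1) ^ Suc j = (\<Sum>r\<le>Suc j. of_nat (Suc j choose r) * a ^ r)"
    using binom_aux'[of a "Suc j"] .
  also have "\<dots> = (\<Sum>r<Suc j. of_nat (Suc j choose r) * a ^ r) + a ^ Suc j"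
    by (simp only: sum.atMost_Suc lessThan_Suc_atMost[symmetric] binomial_n_n) simp
  finally show ?thesis by simp
qed

lemma alt_aux: "A * (y + 1) = M * B \<Longrightarrow> (-1)^(Suc m) * A * (y + 1)^(Suc j) = - M * ((-1)^m * B * (y + 1)^j :: rat)"
proof -
  assume h: "A * (y + 1) = M * B"
  have "(-1)^(Suc m) * A * (y + 1)^(Suc j) = - ((-1)^m * (A * (y + 1)) * (y + 1)^j)" by (simp add: mult_ac)
  also have "\<dots> = - M * ((-1)^m * B * (y + 1)^j)" using h by (simp add: mult_ac)
  finally show ?thesis .
qed

lemma term_aux: "(-1)^(Suc m) * of_nat (Suc N choose Suc m) * (of_nat (Suc m)) ^ Suc j' = - of_nat (Suc N) * ((-1)^m * of_nat (N choose m) * (of_nat m + 1) ^ j' :: rat)"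
proof -
  have "(Suc N choose Suc m) * Suc m = Suc N * (N choose m)"
    using Suc_times_binomial[of m N] by (simp only: mult.commute)
  then have "of_nat ((Suc N choose Suc m) * Suc m) = (of_nat (Suc N * (N choose m)) :: rat)" by (simp only:)
  then have h: "of_nat (Suc N choose Suc m) * (of_nat m + 1 :: rat) = of_nat (Suc N) * of_nat (N choose m)"
    by (simp only: of_nat_mult of_nat_Suc add.commute)
  have e: "(of_nat (Suc m)::rat) = of_nat m + 1" by simp
  show ?thesis unfolding e by (rule alt_aux[OF h])
qed

lemma shift_aux: "(\<Sum>m\<le>Suc N. (-1)^m * of_nat (Suc N choose m) * (of_nat m) ^ Suc j' :: rat)
        = (\<Sum>m\<le>N. (-1)^(Suc m) * of_nat (Suc N choose Suc m) * (of_nat (Suc m)) ^ Suc j')"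
  by (subst sum.atMost_Suc_shift) simp

lemma alt_sum: "j < N \<Longrightarrow> (\<Sum>m\<le>N. (-1)^m * of_nat (N choose m) * (of_nat m) ^ j :: rat) = 0"
proof (induction N arbitrary: j)
  case 0 then show ?case by simp
next
  case (Suc N)
  note IH = Suc.IH and prem = Suc.prems
  show ?case
  proof (cases j)
    case 0
    then show ?thesis using choose_alternating_sum[of "Suc N", where 'a=rat] by simp
  next
    case (Suc j')
    then have jj: "j = Suc j'" .
    have "(\<Sum>m\<le>Suc N. (-1)^m * of_nat (Suc N choose m) * (of_nat m) ^ j :: rat)
        = (\<Sum>m\<le>N. (-1)^(Suc m) * of_nat (Suc N choose Suc m) * (of_nat (Suc m)) ^ j)"
      unfolding jj by (rule shift_aux)
    also have "\<dots> = (\<Sum>m\<le>N. - of_nat (Suc N) * ((-1)^m * of_nat (N choose m) * (of_nat m + 1) ^ j'))"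
      unfolding jj by (intro sum.cong refl term_aux)
    also have "\<dots> = - of_nat (Suc N) * (\<Sum>m\<le>N. (-1)^m * of_nat (N choose m) * (of_nat m + 1) ^ j')"
      by (simp add: sum_distrib_left)
    also have "(\<Sum>m\<le>N. (-1)^m * of_nat (N choose m) * (of_nat m + 1) ^ j' :: rat) = 0"
    proof -
      have "(\<Sum>m\<le>N. (-1)^m * of_nat (N choose m) * (of_nat m + 1) ^ j' :: rat)
        = (\<Sum>m\<le>N. \<Sum>t\<le>j'. of_nat (j' choose t) * ((-1)^m * of_nat (N choose m) * of_nat m ^ t))"
        by (intro sum.cong refl) (simp only: binom_aux' sum_distrib_left mult_ac)
      also have "\<dots> = (\<Sum>t\<le>j'. of_nat (j' choose t) * (\<Sum>m\<le>N. (-1)^m * of_nat (N choose m) * of_nat m ^ t))"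
        by (subst sum.swap) (simp only: sum_distrib_left)
      also have "\<dots> = 0"
        using IH jj prem by (intro sum.neutral) auto
      finally show ?thesis .
    qed
    finally show ?thesis by simp
  qed
qed

context pl
begin

lemma ppoly_add[intro]: "ppoly A \<Longrightarrow> ppoly B \<Longrightarrow> ppoly (A + B)"
  unfolding ppoly_def by auto
lemma ppoly_diff[intro]: "ppoly A \<Longrightarrow> ppoly B \<Longrightarrow> ppoly (A - B)"
  unfolding ppoly_def by auto
lemma ppoly_smult[intro]: "pint p c \<Longrightarrow> ppoly A \<Longrightarrow> ppoly (smult c A)"
  unfolding ppoly_def by auto
lemma ppoly_sum[intro]: "(\<And>i. i \<in> S \<Longrightarrow> ppoly (f i)) \<Longrightarrow> ppoly (sum f S)"
  unfolding ppoly_def coeff_sum by auto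
lemma ppoly_monom[intro]: "pint p c \<Longrightarrow> ppoly (monom c k)"
  unfolding ppoly_def by (auto simp: coeff_monom)
lemma ppoly_mult[intro]: "ppoly A \<Longrightarrow> ppoly B \<Longrightarrow> ppoly (A * B)"
  unfolding ppoly_def coeff_mult by auto
lemma ppoly_pCons[intro]: "pint p c \<Longrightarrow> ppoly A \<Longrightarrow> ppoly (pCons c A)"
  unfolding ppoly_def by (auto simp: coeff_pCons split: nat.split)
lemma ppoly_0[intro]: "ppoly 0"
  unfolding ppoly_def by auto
lemma ppoly_1[intro]: "ppoly 1"
  unfolding ppoly_def by (auto simp: coeff_1)
lemma ppoly_prod[intro]: "(\<And>i. i \<in> S \<Longrightarrow> ppoly (f i)) \<Longrightarrow> ppoly (prod f S)"
  by (induction S rule: infinite_finite_induct) auto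
lemma ppoly_power[intro]: "ppoly A \<Longrightarrow> ppoly (A ^ k)"
  by (induction k) auto

lemma F_exists:
  "j < p - 1 \<Longrightarrow> \<exists>F. ppoly F \<and> degree F \<le> Suc j \<and> poly F 0 = 0 \<and> (\<forall>x. poly F (x + 1) - poly F x = x ^ j)"
proof (induction j rule: less_induct)
  case (less j)
  have "\<forall>r. \<exists>F. r < j \<longrightarrow> (ppoly F \<and> degree F \<le> Suc r \<and> poly F 0 = 0 \<and> (\<forall>x. poly F (x + 1) - poly F x = x ^ r))"
    using less by auto
  from choice[OF this] obtain Fs where Fs: "\<And>r. r < j \<Longrightarrow> ppoly (Fs r) \<and> degree (Fs r) \<le> Suc r \<and> poly (Fs r) 0 = 0 \<and> (\<forall>x. poly (Fs r) (x + 1) - poly (Fs r) x = x ^ r)"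
    by blast
  define G where "G = monom 1 (Suc j) - (\<Sum>r<j. smult (of_nat (Suc j choose r)) (Fs r))"
  define F where "F = smult (1 / of_nat (Suc j)) G"
  have nd: "\<not> p dvd Suc j"
  proof
    assume "p dvd Suc j"
    then have "p \<le> Suc j" by (intro dvd_imp_le) auto
    then show False using less.prems by linarith
  qed
  have pG: "poly G x = x ^ Suc j - (\<Sum>r<j. of_nat (Suc j choose r) * poly (Fs r) x)" for x
    by (simp add: G_def poly_monom poly_sum)
  have "poly G (x + 1) - poly G x = of_nat (Suc j) * x ^ j" for x
  proof -
    have "poly G (x + 1) - poly G x = ((x + 1) ^ Suc j - x ^ Suc j) - (\<Sum>r<j. of_nat (Suc j choose r) * (poly (Fs r) (x+1) - poly (Fs r) x))"
      unfolding pG by (simp add: sum_subtractf algebra_simps)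
    also have "\<dots> = (\<Sum>r<Suc j. of_nat (Suc j choose r) * x ^ r) - (\<Sum>r<j. of_nat (Suc j choose r) * x ^ r)"
    proof -
      have s1: "(\<Sum>r<j. of_nat (Suc j choose r) * (poly (Fs r) (x+1) - poly (Fs r) x)) = (\<Sum>r<j. of_nat (Suc j choose r) * x ^ r)"
        using Fs by (intro sum.cong) auto
      show ?thesis unfolding s1 binom_diff ..
    qed
    also have "\<dots> = of_nat (Suc j) * x ^ j" by simp
    finally show ?thesis .
  qed
  then have "poly F (x + 1) - poly F x = x ^ j" for x
  proof -
    have "poly F (x + 1) - poly F x = (poly G (x + 1) - poly G x) / of_nat (Suc j)"
      unfolding F_def by (simp add: diff_divide_distrib)
    also have "\<dots> = x ^ j" using \<open>\<And>x. poly G (x + 1) - poly G x = of_nat (Suc j) * x ^ j\<close>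
      by (simp del: of_nat_Suc)
    finally show ?thesis .
  qed
  moreover have "poly F 0 = 0" unfolding F_def using pG[of 0] Fs by simp
  moreover have "degree F \<le> Suc j"
    unfolding F_def G_def
    by (intro order.trans[OF degree_smult_le] degree_diff_le degree_monom_le degree_sum_le order.trans[OF degree_smult_le])
       (use Fs in \<open>auto intro: le_SucI less_imp_le_nat order.trans\<close>)
  moreover have "ppoly F"
    unfolding F_def G_def using Fs pint_inv_nat[OF nd]
    by (intro ppoly_smult ppoly_diff ppoly_monom ppoly_sum) (auto simp del: of_nat_Suc)
  ultimately show ?case by blast
qed

lemma R_exists:
  assumes "ppoly P" "degree P < p - 1"
  shows "\<exists>R. ppoly R \<and> degree R \<le> Suc (degree P) \<and> poly R 0 = 0 \<and> (\<forall>x. poly R (x + 1) - poly R x = poly P x)"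
proof -
  have "\<forall>r. \<exists>F. r \<le> degree P \<longrightarrow> (ppoly F \<and> degree F \<le> Suc r \<and> poly F 0 = 0 \<and> (\<forall>x. poly F (x + 1) - poly F x = x ^ r))"
    using F_exists assms(2) by (meson le_less_trans)
  from choice[OF this] obtain Fs where Fs: "\<And>r. r \<le> degree P \<Longrightarrow> ppoly (Fs r) \<and> degree (Fs r) \<le> Suc r \<and> poly (Fs r) 0 = 0 \<and> (\<forall>x. poly (Fs r) (x + 1) - poly (Fs r) x = x ^ r)"
    by blast
  define R where "R = (\<Sum>k\<le>degree P. smult (coeff P k) (Fs k))"
  have "poly R (x + 1) - poly R x = poly P x" for x
  proof -
    have "poly R (x + 1) - poly R x = (\<Sum>k\<le>degree P. coeff P k * (poly (Fs k) (x + 1) - poly (Fs k) x))"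
      unfolding R_def by (simp add: poly_sum sum_subtractf algebra_simps)
    also have "\<dots> = (\<Sum>k\<le>degree P. coeff P k * x ^ k)" using Fs by simp
    finally show ?thesis by (simp add: poly_altdef)
  qed
  moreover have "poly R 0 = 0" unfolding R_def using Fs by (simp add: poly_sum)
  moreover have "degree R \<le> Suc (degree P)"
    unfolding R_def
    by (intro degree_sum_le order.trans[OF degree_smult_le]) (use Fs in force)+
  moreover have "ppoly R"
    unfolding R_def using Fs assms(1) ppoly_def by (intro ppoly_sum ppoly_smult) auto
  ultimately show ?thesis by blast
qed

end

lemma pderiv_lin: "pderiv [:a, b:] = [:b:]"
  by (simp add: pderiv_pCons)

lemma coeff2_zero:
  fixes R P :: "rat poly" and s :: nat
  assumes hR: "\<And>x. poly R (x + 1) - poly R x = poly P x"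
    and R0: "poly R 0 = 0"
    and Psym: "\<And>x. poly P (of_nat s - 1 - x) = poly P x"
    and Pz: "\<And>k. k < s \<Longrightarrow> poly P (of_nat k) = 0"
    and P2: "\<And>k. k < s \<Longrightarrow> poly (pderiv (pderiv P)) (of_nat k) = 0"
  shows "coeff R 2 = 0"
proof -
  have Rk: "k \<le> s \<Longrightarrow> poly R (of_nat k) = 0" for k
  proof (induction k)
    case 0 then show ?case using R0 by simp
  next
    case (Suc k)
    then have "poly R (of_nat k + 1) - poly R (of_nat k) = 0" using hR[of "of_nat k"] Pz[of k] by simp
    then show ?case using Suc by (simp add: add.commute)
  qed
  define Q :: "rat poly" where "Q = [:of_nat s, -1:]"
  have pQ: "poly Q x = of_nat s - x" for x unfolding Q_def by simp
  define D where "D = R + pcompose R Q"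
  have pD: "poly D x = poly R x + poly R (of_nat s - x)" for x
    unfolding D_def by (simp add: poly_pcompose pQ)
  have Dstep: "poly D (x + 1) = poly D x" for x
  proof -
    have a: "poly R (x + 1) = poly R x + poly P x" using hR[of x] by simp
    have b: "poly R (of_nat s - x) = poly R (of_nat s - x - 1) + poly P (of_nat s - 1 - x)"
      using hR[of "of_nat s - x - 1"] by (simp add: algebra_simps)
    have c: "of_nat s - (x + 1) = of_nat s - x - (1::rat)" by simp
    show ?thesis unfolding pD a b c using Psym[of x] by simp
  qed
  have Dk: "poly D (of_nat k) = 0" for k
  proof (induction k)
    case 0 then show ?case using R0 Rk[of s] by (simp add: pD)
  next
    case (Suc k) then show ?case using Dstep[of "of_nat k"] by (simp add: add.commute)
  qed
  have "D = 0"
  proof (rule ccontr)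
    assume "D \<noteq> 0"
    then have "finite {x. poly D x = 0}" by (rule poly_roots_finite)
    moreover have "(\<nat> :: rat set) \<subseteq> {x. poly D x = 0}" using Dk by (auto elim: Nats_cases)
    ultimately show False using Nats_infinite finite_subset by blast
  qed
  then have RQ: "pcompose R Q = - R" unfolding D_def by (simp add: eq_neg_iff_add_eq_0 add.commute)
  define R2 where "R2 = pderiv (pderiv R)"
  have "pderiv (pderiv (pcompose R Q)) = pcompose R2 Q"
    unfolding R2_def Q_def by (simp add: pderiv_pcompose pderiv_lin pderiv_mult pderiv_minus)
  then have "pcompose R2 Q = - R2" unfolding RQ R2_def by (simp add: pderiv_minus)
  then have sym2: "poly R2 (of_nat s - x) = - poly R2 x" for x
    by (metis pQ poly_minus poly_pcompose)
  define S1 :: "rat poly" where "S1 = [:1, 1:]"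
  have "poly (pcompose R S1 - R) = poly P"
    unfolding S1_def by (rule ext) (simp add: poly_pcompose hR[symmetric] add.commute)
  then have RS: "pcompose R S1 - R = P" by (simp add: poly_eq_poly_eq_iff)
  have "pderiv (pderiv (pcompose R S1 - R)) = pcompose R2 S1 - R2"
    unfolding R2_def S1_def by (simp add: pderiv_pcompose pderiv_lin pderiv_diff)
  then have shift2: "pcompose R2 S1 - R2 = pderiv (pderiv P)" unfolding RS by simp
  have R2k: "k \<le> s \<Longrightarrow> poly R2 (of_nat k) = poly R2 0" for k
  proof (induction k)
    case 0 then show ?case by simp
  next
    case (Suc k)
    have "poly (pcompose R2 S1 - R2) (of_nat k) = 0" using shift2 P2[of k] Suc by simp
    then have "poly R2 (of_nat k + 1) = poly R2 (of_nat k)"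
      unfolding S1_def by (simp add: poly_pcompose add.commute)
    then show ?case using Suc by (simp add: add.commute)
  qed
  have "poly R2 0 = 0" using R2k[of s] sym2[of 0] by simp
  moreover have "poly R2 0 = 2 * coeff R 2"
    unfolding R2_def by (simp add: poly_0_coeff_0 coeff_pderiv numeral_2_eq_2)
  ultimately show ?thesis by simp
qed


lemma abel_sum:
  fixes r k :: "nat \<Rightarrow> rat"
  assumes "k 0 = 0"
  shows "(\<Sum>m<Suc M. (r (Suc m) - r m) * k m) = r (Suc M) * k M - (\<Sum>m\<in>{1..M}. r m * (k m - k (m - 1)))"
proof (induction M)
  case 0 then show ?case using assms by simp
next
  case (Suc M)
  have "(\<Sum>m<Suc (Suc M). (r (Suc m) - r m) * k m) = (\<Sum>m<Suc M. (r (Suc m) - r m) * k m) + (r (Suc (Suc M)) - r (Suc M)) * k (Suc M)"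
    by simp
  also have "\<dots> = r (Suc M) * k M - (\<Sum>m\<in>{1..M}. r m * (k m - k (m - 1))) + (r (Suc (Suc M)) - r (Suc M)) * k (Suc M)"
    using Suc by simp
  also have "\<dots> = r (Suc (Suc M)) * k (Suc M) - ((\<Sum>m\<in>{1..M}. r m * (k m - k (m - 1))) + r (Suc M) * (k (Suc M) - k M))"
    by (simp add: algebra_simps)
  also have "(\<Sum>m\<in>{1..M}. r m * (k m - k (m - 1))) + r (Suc M) * (k (Suc M) - k M) = (\<Sum>m\<in>{1..Suc M}. r m * (k m - k (m - 1)))"
    by simp
  finally show ?case .
qed

context pl
begin

definition V :: "nat \<Rightarrow> rat" where
  "V m = (\<Prod>i\<in>{1..m}. 1 - of_nat p / of_nat i)"

lemma V_binom: "m < p \<Longrightarrow> V m = (-1)^m * of_nat ((p - 1) choose m)"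
proof (induction m)
  case 0 then show ?case by (simp add: V_def)
next
  case (Suc m)
  have "Suc m * ((p - 1) choose Suc m) = (p - 1 - m) * ((p - 1) choose m)"
    using binomial_absorption[of m "p - 1"] binomial_absorb_comp[of "p - 1" m] by simp
  then have "(of_nat (Suc m) :: rat) * of_nat ((p - 1) choose Suc m) = of_nat (p - 1 - m) * of_nat ((p - 1) choose m)"
    by (metis of_nat_mult)
  moreover have "(of_nat (p - 1 - m) :: rat) = of_nat p - 1 - of_nat m" using Suc.prems by (simp add: of_nat_diff)
  ultimately have h: "of_nat ((p - 1) choose Suc m) = (of_nat p - 1 - of_nat m) / (of_nat m + 1) * (of_nat ((p - 1) choose m) :: rat)"
    by (simp add: field_simps)
  have "V (Suc m) = V m * (1 - of_nat p / (of_nat m + 1))" by (simp add: V_def add.commute)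
  also have "\<dots> = (-1)^m * of_nat ((p - 1) choose m) * (1 - of_nat p / (of_nat m + 1))" using Suc by simp
  also have "\<dots> = (-1)^(Suc m) * of_nat ((p - 1) choose Suc m)"
    unfolding h by (simp add: field_simps)
  finally show ?case .
qed

lemma sum_PV:
  assumes "degree P < p - 1"
  shows "(\<Sum>m<p. poly P (of_nat m) * V m) = 0"
proof -
  have "(\<Sum>m<p. poly P (of_nat m) * V m) = (\<Sum>m\<le>p - 1. poly P (of_nat m) * ((-1)^m * of_nat ((p - 1) choose m)))"
  proof -
    have "{..<p} = {..p - 1}" using p_pos by auto
    then show ?thesis using V_binom by (intro sum.cong) auto
  qed
  also have "\<dots> = (\<Sum>m\<le>p - 1. \<Sum>k\<le>degree P. coeff P k * ((-1)^m * of_nat ((p - 1) choose m) * of_nat m ^ k))"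
    by (simp add: poly_altdef sum_distrib_left mult_ac)
  also have "\<dots> = (\<Sum>k\<le>degree P. coeff P k * (\<Sum>m\<le>p - 1. (-1)^m * of_nat ((p - 1) choose m) * of_nat m ^ k))"
    by (subst sum.swap) (simp add: sum_distrib_left)
  also have "\<dots> = 0" using assms alt_sum by (intro sum.neutral) auto
  finally show ?thesis .
qed

lemma H1_pm:
  assumes "p > 2"
  shows "pm p 1 (\<Sum>i\<in>{1..<p}. 1 / of_nat i)"
proof -
  let ?H = "(\<Sum>i\<in>{1..<p}. 1 / (of_nat i :: rat))"
  have rev: "?H = (\<Sum>i\<in>{1..<p}. 1 / (of_nat (p - i)))"
    by (subst sum.atLeastLessThan_rev) simp
  have "2 * ?H = (\<Sum>i\<in>{1..<p}. 1 / of_nat i + 1 / of_nat (p - i))"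
    by (subst mult_2, subst (2) rev) (simp add: sum.distrib)
  also have "\<dots> = (\<Sum>i\<in>{1..<p}. of_nat p * (1 / of_nat (i * (p - i))))"
  proof (intro sum.cong refl)
    fix i assume "i \<in> {1..<p}"
    then have "i \<noteq> 0" "p - i \<noteq> 0" "(of_nat (p - i) :: rat) = of_nat p - of_nat i" by (auto simp: of_nat_diff)
    then show "1 / of_nat i + 1 / of_nat (p - i) = of_nat p * (1 / (of_nat (i * (p - i)) :: rat))"
      by (simp add: field_simps)
  qed
  finally have eq: "2 * ?H = (\<Sum>i\<in>{1..<p}. of_nat p * (1 / of_nat (i * (p - i))))" .
  have "pm p 1 (2 * ?H)"
    unfolding eq
  proof (intro pm_sum)
    fix i assume i: "i \<in> {1..<p}"
    have "\<not> p dvd i * (p - i)"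
    proof
      assume "p dvd i * (p - i)"
      then have "p dvd i \<or> p dvd (p - i)" using prime_p prime_dvd_mult_iff by blast
      then show False using i by (auto dest: dvd_imp_le)
    qed
    then show "pm p 1 (of_nat p * (1 / of_nat (i * (p - i))))"
      using pm_intro[of "1 / of_nat (i * (p - i))" 1] pint_inv_nat[OF \<open>\<not> p dvd i * (p - i)\<close>] by simp
  qed
  moreover have "pint p (1 / 2)"
  proof -
    have "\<not> p dvd 2" using assms by (auto dest: dvd_imp_le)
    then show ?thesis using pint_inv_nat[of 2] by simp
  qed
  ultimately have "pm p 1 (2 * ?H * (1 / 2))" by (rule pm_mult_pint)
  then show ?thesis by simp
qed

definition H2 :: "nat \<Rightarrow> rat" where
  "H2 m = (\<Sum>i\<in>{1..m}. 1 / of_nat i ^ 2)"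

lemma H2_pint: "m < p \<Longrightarrow> pint p (H2 m)"
  unfolding H2_def
proof (intro pint_sum)
  fix i assume "m < p" "i \<in> {1..m}"
  then have "\<not> p dvd i" by (auto dest: dvd_imp_le)
  then have "\<not> p dvd i ^ 2"
    using prime_p prime_dvd_power by blast
  then show "pint p (1 / of_nat i ^ 2)" using pint_inv_nat[of "i ^ 2"] by simp
qed

lemma stepD:
  assumes P: "ppoly P" "degree P < p - 1"
    and R: "ppoly R" "degree R \<le> p - 1" "poly R 0 = 0" "coeff R 2 = 0"
    and hR: "\<And>x. poly R (x + 1) - poly R x = poly P x"
    and p2: "p > 2"
  shows "pm p 1 (\<Sum>m<p. poly P (of_nat m) * H2 m)"
proof -
  define r where "r m = poly R (of_nat m)" for m
  obtain M where M: "p = Suc M" using p_pos by (cases p) auto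
  have dr: "r (Suc m) - r m = poly P (of_nat m)" for m
    using hR[of "of_nat m"] by (simp add: r_def add.commute)
  have "(\<Sum>m<p. poly P (of_nat m) * H2 m) = (\<Sum>m<Suc M. (r (Suc m) - r m) * H2 m)"
    unfolding M dr ..
  also have "\<dots> = r (Suc M) * H2 M - (\<Sum>m\<in>{1..M}. r m * (H2 m - H2 (m - 1)))"
    by (rule abel_sum) (simp add: H2_def)
  also have "(\<Sum>m\<in>{1..M}. r m * (H2 m - H2 (m - 1))) = (\<Sum>m\<in>{1..<p}. r m / of_nat m ^ 2)"
  proof -
    have "{1..M} = {1..<p}" using M by auto
    moreover have "H2 m - H2 (m - 1) = 1 / of_nat m ^ 2" if m1: "m \<ge> 1" for m
    proof -
      obtain l where "m = Suc l" using m1 by (cases m) auto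
      then show ?thesis by (simp add: H2_def del: of_nat_Suc)
    qed
    ultimately show ?thesis by (intro sum.cong) auto
  qed
  finally have eq: "(\<Sum>m<p. poly P (of_nat m) * H2 m) = r p * H2 M - (\<Sum>m\<in>{1..<p}. r m / of_nat m ^ 2)"
    using M by simp
  have rp: "pm p 1 (r p)"
  proof -
    have "r p = (\<Sum>m<p. r (Suc m) - r m)" using sum_lessThan_telescope[of r p] R(3) by (simp add: r_def)
    also have "\<dots> = (\<Sum>m<p. poly P (of_nat m))" unfolding dr ..
    finally show ?thesis using poly_sum_pm[OF P] by simp
  qed
  have "pm p 1 (r p * H2 M)" using rp H2_pint[of M] M by (intro pm_mult_pint) auto
  moreover have "pm p 1 (\<Sum>m\<in>{1..<p}. r m / of_nat m ^ 2)"
  proof -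
    have "(\<Sum>m\<in>{1..<p}. r m / of_nat m ^ 2) = (\<Sum>m\<in>{1..<p}. \<Sum>k\<le>degree R. coeff R k * (of_nat m ^ k / of_nat m ^ 2))"
      unfolding r_def by (simp add: poly_altdef sum_divide_distrib)
    also have "\<dots> = (\<Sum>k\<le>degree R. coeff R k * (\<Sum>m\<in>{1..<p}. of_nat m ^ k / of_nat m ^ 2))"
      by (subst sum.swap) (simp add: sum_distrib_left)
    finally have eq2: "(\<Sum>m\<in>{1..<p}. r m / of_nat m ^ 2) = (\<Sum>k\<le>degree R. coeff R k * (\<Sum>m\<in>{1..<p}. of_nat m ^ k / of_nat m ^ 2))" .
    show ?thesis unfolding eq2
    proof (intro pm_sum)
      fix k assume k: "k \<in> {..degree R}"
      have c0: "coeff R 0 = 0" using R(3) by (simp add: poly_0_coeff_0)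
      show "pm p 1 (coeff R k * (\<Sum>m\<in>{1..<p}. of_nat m ^ k / of_nat m ^ 2))"
      proof (cases "k = 0 \<or> k = 2")
        case True then show ?thesis using c0 R(4) by auto
      next
        case False
        have cp: "pint p (coeff R k)" using R(1) ppoly_def by auto
        show ?thesis
        proof (cases "k = 1")
          case True
          have "(\<Sum>m\<in>{1..<p}. (of_nat m :: rat) ^ k / of_nat m ^ 2) = (\<Sum>m\<in>{1..<p}. 1 / of_nat m)"
            using True by (intro sum.cong) (auto simp: power2_eq_square)
          then show ?thesis using H1_pm[OF p2] cp by (simp add: pm_pint_mult)
        next
          case k1: False
          then have k3: "k \<ge> 3" using False by auto
          have "(\<Sum>m\<in>{1..<p}. (of_nat m :: rat) ^ k / of_nat m ^ 2) = (\<Sum>m\<in>{1..<p}. of_nat m ^ (k - 2))"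
          proof (intro sum.cong refl)
            fix m assume "m \<in> {1..<p}"
            then have "(of_nat m :: rat) \<noteq> 0" by auto
            moreover have "(of_nat m :: rat) ^ k = of_nat m ^ (k - 2) * of_nat m ^ 2"
            proof -
              have kk: "k = (k - 2) + 2" using k3 by simp
              show ?thesis by (subst kk) (simp only: power_add diff_add_inverse2)
            qed
            ultimately show "(of_nat m :: rat) ^ k / of_nat m ^ 2 = of_nat m ^ (k - 2)" by simp
          qed
          also have "\<dots> = (\<Sum>m<p. of_nat m ^ (k - 2))"
          proof -
            have "{..<p} = insert 0 {1..<p}" using p_pos by auto
            moreover have "(0::rat) ^ (k - 2) = 0" using k3 by simp
            ultimately show ?thesis by simp
          qed
          finally have "(\<Sum>m\<in>{1..<p}. (of_nat m :: rat) ^ k / of_nat m ^ 2) = (\<Sum>m<p. of_nat m ^ (k - 2))" .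
          moreover have "k - 2 < p - 1" using k R(2) k3 by auto
          ultimately show ?thesis using power_sum_pm cp by (simp add: pm_pint_mult)
        qed
      qed
    qed
  qed
  ultimately show ?thesis unfolding eq by (rule pm_diff)
qed

end

lemma alg_id:
  fixes A e V P c H i :: rat
  assumes "i \<noteq> 0"
  shows "A*e - V*(1 - P/i) - c*P^2*(H + 1/i^2) = (A - (V + c*P^2*H))*e + (V + c*P^2*H)*(e - (1 - P/i + c*P^2/i^2)) + (P^2*(c/i^2))*(V - 1) + P^3*(c*H*(-1/i + c*P/i^2))"
  using assms by (simp add: field_simps power2_eq_square power3_eq_cube)

context pl
begin

lemma two_choose: "2 * (of_nat (n choose 2) :: rat) = of_nat n * (of_nat n - 1)"
proof (cases n)
  case 0 then show ?thesis by simp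
next
  case (Suc l)
  have "Suc 1 * (n choose Suc 1) = n * ((n - 1) choose 1)" by (rule binomial_absorption)
  then have "2 * (n choose 2) = n * l" using Suc by (simp add: numeral_2_eq_2)
  then have "(2 * of_nat (n choose 2) :: rat) = of_nat n * of_nat l" by (metis of_nat_mult of_nat_numeral)
  then show ?thesis using Suc by simp
qed

lemma term_exp:
  assumes n: "2 \<le> n" "n < p" and i: "1 \<le> i" "i < p"
  shows "pm p 3 ((1 - (of_nat p / of_nat n) / of_nat i)^n
            - (1 - of_nat p / of_nat i + ((of_nat n - 1) / (2 * of_nat n)) * of_nat p^2 / of_nat i^2))"
proof -
  define y :: rat where "y = - 1 / (of_nat n * of_nat i)"
  have ndvd: "\<not> p dvd n * i"
  proof
    assume "p dvd n * i"
    then have "p dvd n \<or> p dvd i" using prime_p prime_dvd_mult_iff by blast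
    then show False using n i by (auto dest: dvd_imp_le)
  qed
  have "y = - (1 / of_nat (n * i))" unfolding y_def by simp
  then have py: "pint p y" using pint_inv_nat[OF ndvd] pint_uminus by simp
  have ni0: "(of_nat n :: rat) \<noteq> 0" "(of_nat i :: rat) \<noteq> 0" using n i by auto
  have base: "1 - (of_nat p / of_nat n) / of_nat i = of_nat p * y + 1"
    unfolding y_def using ni0 by (simp add: field_simps)
  define f where "f r = of_nat (n choose r) * (of_nat p * y) ^ r" for r
  have "(of_nat p * y + 1) ^ n = (\<Sum>r\<le>n. f r)" unfolding f_def by (rule binom_aux')
  also have "\<dots> = (\<Sum>r\<in>{0..<3}. f r) + (\<Sum>r\<in>{3..<Suc n}. f r)"
  proof -
    have "{..n} = {0..<Suc n}" by auto
    then show ?thesis using sum.atLeastLessThan_concat[of 0 3 "Suc n" f] n by simp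
  qed
  also have "(\<Sum>r\<in>{0..<3}. f r) = f 0 + f 1 + f 2"
    by (simp add: numeral_3_eq_3 numeral_2_eq_2)
  also have "f 0 + f 1 + f 2 = 1 - of_nat p / of_nat i + ((of_nat n - 1) / (2 * of_nat n)) * of_nat p^2 / of_nat i^2"
  proof -
    have f2: "f 2 = of_nat (n choose 2) * of_nat p ^ 2 * y ^ 2" unfolding f_def by (simp add: power_mult_distrib)
    have "f 2 = ((of_nat n - 1) / (2 * of_nat n)) * of_nat p^2 / of_nat i^2"
    proof -
      have C: "(of_nat (n choose 2) :: rat) = of_nat n * (of_nat n - 1) / 2" using two_choose[of n] by simp
      show ?thesis unfolding f2 C y_def using ni0 by (simp add: field_simps power2_eq_square)
    qed
    moreover have "f 1 = - of_nat p / of_nat i" unfolding f_def y_def using ni0 by (simp add: field_simps)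
    moreover have "f 0 = 1" unfolding f_def by simp
    ultimately show ?thesis by simp
  qed
  finally have eq: "(of_nat p * y + 1) ^ n - (1 - of_nat p / of_nat i + ((of_nat n - 1) / (2 * of_nat n)) * of_nat p^2 / of_nat i^2)
      = (\<Sum>r\<in>{3..<Suc n}. f r)" by simp
  have "pm p 3 (\<Sum>r\<in>{3..<Suc n}. f r)"
  proof (intro pm_sum)
    fix r assume r: "r \<in> {3..<Suc n}"
    have "f r = of_nat p ^ r * (of_nat (n choose r) * y ^ r)" unfolding f_def by (simp add: power_mult_distrib)
    moreover have "pm p r (of_nat p ^ r * (of_nat (n choose r) * y ^ r))"
      using py by (intro pm_intro pint_mult pint_power pint_nat)
    ultimately show "pm p 3 (f r)" using r pm_mono[of 3 r] by auto
  qed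
  then show ?thesis unfolding base eq .
qed

definition ff :: "nat \<Rightarrow> nat \<Rightarrow> rat" where
  "ff n m = (\<Prod>i\<in>{1..m}. 1 - (of_nat p / of_nat n) / of_nat i)"

definition cc :: "nat \<Rightarrow> rat" where
  "cc n = (of_nat n - 1) / (2 * of_nat n)"

lemma stepB:
  assumes n: "2 \<le> n" "n < p" "p > 2"
  shows "m < p \<Longrightarrow> pm p 3 (ff n m ^ n - V m - cc n * of_nat p^2 * H2 m) \<and> pm p 1 (V m - 1) \<and> pint p (V m)"
proof (induction m)
  case 0 then show ?case by (simp add: ff_def V_def H2_def)
next
  case (Suc m)
  then have IH: "pm p 3 (ff n m ^ n - V m - cc n * of_nat p^2 * H2 m)" "pm p 1 (V m - 1)" "pint p (V m)" by auto
  define i :: rat where "i = of_nat (Suc m)"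
  have i0: "i \<noteq> 0" unfolding i_def by simp
  have ndi: "\<not> p dvd Suc m" using Suc.prems by (auto dest: dvd_imp_le)
  have pinvi: "pint p (1 / i)" unfolding i_def using pint_inv_nat[OF ndi] .
  have ncc: "pint p (cc n)"
  proof -
    have "\<not> p dvd 2 * n"
    proof
      assume "p dvd 2 * n"
      then have "p dvd 2 \<or> p dvd n" using prime_p prime_dvd_mult_iff by blast
      then show False using n by (auto dest: dvd_imp_le)
    qed
    then have "pint p (of_nat (n - 1) / of_nat (2 * n))" by (rule pint_div_nat)
    moreover have "(of_nat (n - 1) :: rat) = of_nat n - 1" using n by (simp add: of_nat_diff)
    ultimately show ?thesis unfolding cc_def by simp
  qed
  define e where "e = (1 - (of_nat p / of_nat n) / i) ^ n"
  define e' where "e' = 1 - of_nat p / i + cc n * of_nat p^2 / i^2"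
  have ee: "pm p 3 (e - e')" unfolding e_def e'_def i_def cc_def
    using term_exp[of n "Suc m"] n Suc.prems by simp
  have epint: "pint p e"
  proof -
    have "pint p (1 - (of_nat p / of_nat n) / i)"
    proof -
      have "(of_nat p / of_nat n) / i = of_nat p * (1 / i) * (1 / of_nat n)" by simp
      moreover have "pint p (1 / of_nat n)"
      proof -
        have "\<not> p dvd n" using n by (auto dest: dvd_imp_le)
        then show ?thesis by (rule pint_inv_nat)
      qed
      ultimately show ?thesis using pinvi by (metis pint_1 pint_diff pint_mult pint_nat)
    qed
    then show ?thesis unfolding e_def by (rule pint_power)
  qed
  have ffS: "ff n (Suc m) = ff n m * (1 - (of_nat p / of_nat n) / i)"
    unfolding ff_def i_def by simp
  have VS: "V (Suc m) = V m * (1 - of_nat p / i)" unfolding V_def i_def by simp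
  have HS: "H2 (Suc m) = H2 m + 1 / i^2" unfolding H2_def i_def by simp
  have Hp: "pint p (H2 m)" using H2_pint Suc.prems by simp
  have Bp: "pint p (V m + cc n * of_nat p^2 * H2 m)" using IH(3) ncc Hp
    by (intro pint_add pint_mult pint_power pint_nat)
  have main: "ff n (Suc m) ^ n - V (Suc m) - cc n * of_nat p^2 * H2 (Suc m)
     = (ff n m ^ n - (V m + cc n * of_nat p^2 * H2 m)) * e + (V m + cc n * of_nat p^2 * H2 m) * (e - e')
       + (of_nat p^2 * (cc n / i^2)) * (V m - 1) + of_nat p^3 * (cc n * H2 m * (-1/i + cc n * of_nat p / i^2))"
    unfolding ffS VS HS e_def e'_def power_mult_distrib
    by (rule alg_id[OF i0])
  have t1: "pm p 3 ((ff n m ^ n - (V m + cc n * of_nat p^2 * H2 m)) * e)"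
    using IH(1) epint by (intro pm_mult_pint) (simp add: algebra_simps)
  have t2: "pm p 3 ((V m + cc n * of_nat p^2 * H2 m) * (e - e'))"
    using Bp ee by (rule pm_pint_mult)
  have t3: "pm p 3 ((of_nat p^2 * (cc n / i^2)) * (V m - 1))"
  proof -
    have "pm p 2 (of_nat p^2 * (cc n / i^2))"
    proof (intro pm_intro)
      have eq: "cc n / i^2 = cc n * (1/i) * (1/i)" by (simp add: power2_eq_square)
      show "pint p (cc n / i^2)" unfolding eq using ncc pinvi by (intro pint_mult)
    qed
    then have "pm p (2 + 1) ((of_nat p^2 * (cc n / i^2)) * (V m - 1))" using IH(2) by (rule pm_mult)
    then show ?thesis by simp
  qed
  have t4: "pm p 3 (of_nat p^3 * (cc n * H2 m * (-1/i + cc n * of_nat p / i^2)))"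
  proof (intro pm_intro)
    have eq: "-1/i + cc n * of_nat p / i^2 = - (1/i) + cc n * of_nat p * ((1/i) * (1/i))"
      by (simp add: power2_eq_square)
    show "pint p (cc n * H2 m * (-1/i + cc n * of_nat p / i^2))"
      unfolding eq using ncc Hp pinvi by (intro pint_add pint_mult pint_uminus pint_nat)
  qed
  have r1: "pm p 3 (ff n (Suc m) ^ n - V (Suc m) - cc n * of_nat p^2 * H2 (Suc m))"
    unfolding main using t1 t2 t3 t4 by (intro pm_add)
  have r2: "pm p 1 (V (Suc m) - 1)"
  proof -
    have "V (Suc m) - 1 = (V m - 1) * (1 - of_nat p / i) + of_nat p ^ 1 * (- (1 / i))"
      unfolding VS by (simp add: algebra_simps)
    moreover have pq: "pint p (1 - of_nat p / i)"
    proof -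
      have "1 - of_nat p / i = 1 - of_nat p * (1 / i)" by simp
      then show ?thesis using pinvi by (simp only: pint_diff pint_mult pint_1 pint_nat)
    qed
    moreover have "pm p 1 ((V m - 1) * (1 - of_nat p / i))" using IH(2) pq by (rule pm_mult_pint)
    moreover have "pm p 1 (of_nat p ^ 1 * (- (1 / i)))" using pinvi by (intro pm_intro pint_uminus)
    ultimately show ?thesis by (simp only: pm_add)
  qed
  have r3: "pint p (V (Suc m))"
  proof -
    have "V (Suc m) = V m * (1 - of_nat p * (1 / i))" unfolding VS by simp
    then show ?thesis using IH(3) pinvi by (simp only: pint_diff pint_mult pint_1 pint_nat)
  qed
  show ?case using r1 r2 r3 by blast
qed

end

lemma dvd_pderiv_lin:
  fixes A :: "rat poly"
  assumes "[:a, 1:] ^ Suc j dvd A"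
  shows "[:a, 1:] ^ j dvd pderiv A"
proof -
  let ?L = "[:a, 1:] :: rat poly"
  obtain B where B: "A = ?L ^ Suc j * B" using assms by (elim dvdE)
  have "pderiv A = ?L ^ Suc j * pderiv B + B * (smult (of_nat (Suc j)) (?L ^ j) * pderiv ?L)"
    unfolding B pderiv_mult pderiv_power_Suc ..
  also have "\<dots> = ?L ^ j * (?L * pderiv B + smult (of_nat (Suc j)) B)"
    by (simp add: pderiv_pCons algebra_simps)
  finally show ?thesis by simp
qed

lemma aux_lin: "(x::rat) + 1 \<noteq> 0 \<Longrightarrow> (x + 1) * (1 - E / (x + 1)) = 1 - E + x"
  by (simp add: field_simps)

lemma cancel_aux: "(u::rat) \<noteq> 0 \<Longrightarrow> S = S * u ^ n * (1 / u) ^ n"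
  by (simp add: power_one_over)

lemma fact_shift: "fact (s + k) = fact k * (\<Prod>j<s. (of_nat (s + k) - of_nat j :: rat))"
proof (induction s)
  case 0 then show ?case by simp
next
  case (Suc s)
  have "(\<Prod>j<Suc s. (of_nat (Suc s + k) - of_nat j :: rat)) = of_nat (Suc s + k) * (\<Prod>j<s. (of_nat (Suc s + k) - of_nat (Suc j)))"
    by (subst prod.lessThan_Suc_shift) simp
  also have "(\<Prod>j<s. (of_nat (Suc s + k) - of_nat (Suc j) :: rat)) = (\<Prod>j<s. (of_nat (s + k) - of_nat j))"
    by (intro prod.cong refl) simp
  finally have "(\<Prod>j<Suc s. (of_nat (Suc s + k) - of_nat j :: rat)) = of_nat (Suc s + k) * (\<Prod>j<s. (of_nat (s + k) - of_nat j))" .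
  moreover have "fact (Suc s + k) = (of_nat (Suc s + k) :: rat) * fact (s + k)"
    by (simp add: fact_Suc)
  ultimately show ?case using Suc by (simp add: mult_ac)
qed

context pl
begin

lemma poch_ff: "pochhammer (1 - of_nat p / of_nat n) m = fact m * ff n m"
proof (induction m)
  case 0 then show ?case by (simp add: ff_def)
next
  case (Suc m)
  have "pochhammer (1 - of_nat p / of_nat n) (Suc m) = pochhammer (1 - of_nat p / of_nat n) m * (1 - of_nat p / of_nat n + of_nat m)"
    by (simp add: pochhammer_Suc)
  also have "\<dots> = fact m * ff n m * ((of_nat m + 1) * (1 - (of_nat p / of_nat n) / (of_nat m + 1)))"
  proof -
    have nz: "(of_nat m + 1 :: rat) \<noteq> 0" by (simp add: add_nonneg_eq_0_iff)
    have "(of_nat m + 1) * (1 - (of_nat p / of_nat n) / (of_nat m + 1)) = 1 - of_nat p / of_nat n + (of_nat m :: rat)"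
      using aux_lin[OF nz] .
    then show ?thesis using Suc by simp
  qed
  also have "\<dots> = fact (Suc m) * ff n (Suc m)"
    by (simp add: ff_def fact_Suc add.commute mult_ac)
  finally show ?case .
qed

lemma pint_inv_prod: "(\<And>i. i \<in> A \<Longrightarrow> pint p (1 / f i)) \<Longrightarrow> pint p (1 / prod f A)"
proof (induction A rule: infinite_finite_induct)
  case (insert x F)
  have eq: "1 / prod f (insert x F) = (1 / f x) * (1 / prod f F)" using insert.hyps by simp
  have "pint p (1 / f x)" "pint p (1 / prod f F)" using insert by auto
  then show ?case unfolding eq by (rule pint_mult)
qed auto

lemma main_pm:
  assumes n3: "n > 2" and q: "q > 0" and par: "even n \<or> odd q"
    and big: "p > max n ((q - 1) * n + 1)"
  shows "pm p 3 (\<Sum>k<p. (pochhammer (of_nat q - of_nat p / of_nat n :: rat) k) ^ n / (pochhammer (1 :: rat) k) ^ n)"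
proof -
  define s where "s = q - 1"
  have np: "n < p" using big by simp
  have p2: "p > 2" using np n3 by simp
  have sn: "s * n + 1 < p" using big unfolding s_def by simp
  have "s \<le> s * n" using n3 by simp
  then have sp: "s < p" using sn by linarith
  define g :: "rat poly" where "g = (\<Prod>j<s. [:- of_nat j, 1:])"
  define P where "P = g ^ n"
  have pg: "poly g x = (\<Prod>j<s. x - of_nat j)" for x unfolding g_def by (simp add: poly_prod)
  have pP: "poly P x = (\<Prod>j<s. x - of_nat j) ^ n" for x unfolding P_def by (simp add: pg)
  have ppP: "ppoly P" unfolding P_def g_def by (intro ppoly_power ppoly_prod ppoly_pCons) auto
  have degP: "degree P < p - 1"
  proof -
    have "degree g \<le> s"
    proof -
      have "degree g \<le> sum (degree \<circ> (\<lambda>j. [:- of_nat j, 1 :: rat:])) {..<s}"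
        unfolding g_def by (rule degree_prod_sum_le) simp
      also have "\<dots> = s" by simp
      finally show ?thesis .
    qed
    then have "degree P \<le> s * n" unfolding P_def using degree_power_le[of g n] by (meson le_trans mult_le_mono1)
    then show ?thesis using sn by simp
  qed
  have Pz: "poly P (of_nat k) = 0" if "k < s" for k
  proof -
    have "(\<Prod>j<s. (of_nat k :: rat) - of_nat j) = 0" using that by (intro prod_zero) auto
    then show ?thesis unfolding pP using n3 by simp
  qed
  have Psym: "poly P (of_nat s - 1 - x) = poly P x" for x
  proof -
    have "(\<Prod>j<s. (of_nat s - 1 - x) - of_nat j) = (\<Prod>j<s. (of_nat s - 1 - x) - of_nat (s - Suc j))"
      by (rule prod.nat_diff_reindex[symmetric])
    also have "\<dots> = (\<Prod>j<s. - (x - of_nat j))"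
      by (intro prod.cong refl) (auto simp: of_nat_diff)
    also have "\<dots> = (-1) ^ s * (\<Prod>j<s. x - of_nat j)" by (subst prod_uminus) simp
    finally have "poly P (of_nat s - 1 - x) = ((-1) ^ s * (\<Prod>j<s. x - of_nat j)) ^ n" unfolding pP by simp
    also have "\<dots> = (-1) ^ (s * n) * (\<Prod>j<s. x - of_nat j) ^ n" by (simp add: power_mult_distrib power_mult)
    also have "(-1 :: rat) ^ (s * n) = 1"
    proof -
      have "even (s * n)" using par unfolding s_def using q by auto
      then show ?thesis by simp
    qed
    finally show ?thesis unfolding pP by simp
  qed
  have P2: "poly (pderiv (pderiv P)) (of_nat k) = 0" if "k < s" for k
  proof -
    let ?L = "[:- of_nat k, 1:] :: rat poly"
    have "?L dvd g" unfolding g_def using that by (intro dvd_prodI) auto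
    then have "?L ^ 3 dvd g ^ 3" by (rule dvd_power_same)
    moreover have "g ^ 3 dvd g ^ n" using n3 by (intro le_imp_power_dvd) simp
    ultimately have "?L ^ Suc (Suc (Suc 0)) dvd P" unfolding P_def by (simp add: numeral_3_eq_3 dvd_trans)
    then have "?L ^ Suc 0 dvd pderiv (pderiv P)" by (intro dvd_pderiv_lin)
    then show ?thesis by (simp add: poly_eq_0_iff_dvd)
  qed
  obtain R where R: "ppoly R" "degree R \<le> Suc (degree P)" "poly R 0 = 0"
      and hR: "\<And>x. poly R (x + 1) - poly R x = poly P x"
    using R_exists[OF ppP degP] by blast
  have R2: "coeff R 2 = 0" using coeff2_zero[of R P s] hR R(3) Psym Pz P2 by blast
  have degR: "degree R \<le> p - 1" using R(2) degP by simp
  have D: "pm p 1 (\<Sum>m<p. poly P (of_nat m) * H2 m)"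
    using stepD[OF ppP degP R(1) degR R(3) R2 hR p2] .
  define X where "X = (\<Sum>m<p. poly P (of_nat m) * ff n m ^ n)"
  have X: "pm p 3 X"
  proof -
    have "X = (\<Sum>m<p. poly P (of_nat m) * (ff n m ^ n - V m - cc n * of_nat p^2 * H2 m))
             + (\<Sum>m<p. poly P (of_nat m) * V m) + of_nat p ^ 2 * (cc n * (\<Sum>m<p. poly P (of_nat m) * H2 m))"
      unfolding X_def by (simp add: algebra_simps sum.distrib sum_distrib_left sum_subtractf)
    also have "(\<Sum>m<p. poly P (of_nat m) * V m) = 0" using sum_PV[OF degP] .
    finally have eq: "X = (\<Sum>m<p. poly P (of_nat m) * (ff n m ^ n - V m - cc n * of_nat p^2 * H2 m))
             + of_nat p ^ 2 * (cc n * (\<Sum>m<p. poly P (of_nat m) * H2 m))" by simp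
    have "pm p 3 (\<Sum>m<p. poly P (of_nat m) * (ff n m ^ n - V m - cc n * of_nat p^2 * H2 m))"
    proof (intro pm_sum pm_pint_mult)
      fix m assume "m \<in> {..<p}"
      then show "pm p 3 (ff n m ^ n - V m - cc n * of_nat p^2 * H2 m)" using stepB[of n m] n3 np p2 by auto
      show "pint p (poly P (of_nat m))" unfolding pP by (intro pint_power pint_prod pint_diff pint_nat)
    qed
    moreover have "pm p (2 + 1) (of_nat p ^ 2 * (cc n * (\<Sum>m<p. poly P (of_nat m) * H2 m)))"
    proof (rule pm_mult)
      show "pm p 2 (of_nat p ^ 2)" using pm_intro[of 1 2] by simp
      have "pint p (cc n)"
      proof -
        have "\<not> p dvd 2 * n"
        proof
          assume "p dvd 2 * n"
          then have "p dvd 2 \<or> p dvd n" using prime_p prime_dvd_mult_iff by blast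
          then show False using np p2 n3 by (auto dest: dvd_imp_le)
        qed
        then have "pint p (of_nat (n - 1) / of_nat (2 * n))" by (rule pint_div_nat)
        moreover have "(of_nat (n - 1) :: rat) = of_nat n - 1" using n3 by (simp add: of_nat_diff)
        ultimately show ?thesis unfolding cc_def by simp
      qed
      then show "pm p 1 (cc n * (\<Sum>m<p. poly P (of_nat m) * H2 m))" using D by (rule pm_pint_mult)
    qed
    ultimately show ?thesis unfolding eq by (intro pm_add) auto
  qed
  define eps :: rat where "eps = of_nat p / of_nat n"
  define a :: rat where "a = of_nat q - eps"
  define u where "u = pochhammer (1 - eps) s"
  define W where "W k = (pochhammer (1 - eps) (s + k) / fact k) ^ n" for k
  have poch_split: "pochhammer (1 - eps) (s + k) = u * pochhammer a k" for k
  proof -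
    have "1 - eps + of_nat s = a" unfolding a_def s_def using q by (simp add: of_nat_diff)
    then show ?thesis unfolding u_def using pochhammer_product'[of "1 - eps" s k] by simp
  qed
  have Su: "(\<Sum>k<p. (pochhammer a k) ^ n / (pochhammer 1 k) ^ n) * u ^ n = (\<Sum>k<p. W k)"
    unfolding sum_distrib_right W_def poch_split
    by (intro sum.cong refl) (simp add: pochhammer_fact power_mult_distrib power_divide)
  have split: "(\<Sum>k<p. W k) = (\<Sum>k\<in>{0..<p - s}. W k) + (\<Sum>k\<in>{p - s..<p}. W k)"
    using sum.atLeastLessThan_concat[of 0 "p - s" p W] by (simp add: lessThan_atLeast0)
  have hi: "pm p 3 (\<Sum>k\<in>{p - s..<p}. W k)"
  proof (intro pm_sum)
    fix k assume k: "k \<in> {p - s..<p}"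
    have epsd: "eps = of_nat p * (1 / of_nat n)" unfolding eps_def by simp
    have pn: "pint p (1 / of_nat n)"
    proof -
      have "\<not> p dvd n" using np n3 by (auto dest: dvd_imp_le)
      then show ?thesis by (rule pint_inv_nat)
    qed
    have fin: "finite {0..<s + k}" by simp
    have mem: "p - 1 \<in> {0..<s + k}" using k p2 by auto
    have "pochhammer (1 - eps) (s + k) = (\<Prod>i\<in>{0..<s + k}. 1 - eps + of_nat i)" by (rule pochhammer_prod)
    also have "\<dots> = (1 - eps + of_nat (p - 1)) * (\<Prod>i\<in>{0..<s + k} - {p - 1}. 1 - eps + of_nat i)"
      using prod.remove[OF fin mem] .
    finally have pe: "pochhammer (1 - eps) (s + k) = (1 - eps + of_nat (p - 1)) * (\<Prod>i\<in>{0..<s + k} - {p - 1}. 1 - eps + of_nat i)" .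
    have "1 - eps + of_nat (p - 1) = of_nat p ^ 1 * (1 - 1 / of_nat n)"
      unfolding epsd using p2 by (simp add: of_nat_diff algebra_simps)
    then have pm1: "pm p 1 (1 - eps + of_nat (p - 1))" using pn by (metis pm_intro pint_1 pint_diff)
    have pr: "pint p (\<Prod>i\<in>{0..<s + k} - {p - 1}. 1 - eps + of_nat i)"
      unfolding epsd using pn by (intro pint_prod pint_add pint_diff pint_mult pint_1 pint_nat)
    have "pm p 1 (pochhammer (1 - eps) (s + k))" unfolding pe using pm1 pr by (rule pm_mult_pint)
    moreover have "pint p (1 / fact k)"
    proof -
      have "\<not> p dvd fact k" using k prime_dvd_fact_iff[OF prime_p] by auto
      then show ?thesis using pint_inv_nat[of "fact k"] by simp
    qed
    ultimately have "pm p 1 (pochhammer (1 - eps) (s + k) / fact k)"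
      using pm_mult_pint by (metis times_divide_eq_right mult_1_right)
    then have "pm p n (W k)" unfolding W_def by (rule pm_power)
    then show "pm p 3 (W k)" using n3 by (intro pm_mono[of 3 n]) auto
  qed
  have lo: "(\<Sum>k\<in>{0..<p - s}. W k) = X"
  proof -
    have Wk: "W k = poly P (of_nat (k + s)) * ff n (k + s) ^ n" if "k \<in> {0..<p - s}" for k
    proof -
      have "pochhammer (1 - eps) (s + k) / fact k = poly g (of_nat (s + k)) * ff n (s + k)"
        unfolding eps_def poch_ff fact_shift[of s k] pg by (simp add: field_simps)
      then show ?thesis unfolding W_def P_def by (simp add: power_mult_distrib add.commute)
    qed
    have "(\<Sum>k\<in>{0..<p - s}. W k) = (\<Sum>k\<in>{0..<p - s}. poly P (of_nat (k + s)) * ff n (k + s) ^ n)"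
      using Wk by (rule sum.cong[OF refl])
    also have "\<dots> = (\<Sum>m\<in>{s..<p}. poly P (of_nat m) * ff n m ^ n)"
      using sum.shift_bounds_nat_ivl[of "\<lambda>m. poly P (of_nat m) * ff n m ^ n" 0 s "p - s"] sp by simp
    also have "\<dots> = X"
    proof -
      have "X = (\<Sum>m\<in>{0..<s}. poly P (of_nat m) * ff n m ^ n) + (\<Sum>m\<in>{s..<p}. poly P (of_nat m) * ff n m ^ n)"
        unfolding X_def using sum.atLeastLessThan_concat[of 0 s p "\<lambda>m. poly P (of_nat m) * ff n m ^ n"] sp
        by (simp add: lessThan_atLeast0)
      moreover have "(\<Sum>m\<in>{0..<s}. poly P (of_nat m) * ff n m ^ n) = 0" using Pz by (intro sum.neutral) auto
      ultimately show ?thesis by simp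
    qed
    finally show ?thesis .
  qed
  have Sun: "pm p 3 ((\<Sum>k<p. (pochhammer a k) ^ n / (pochhammer 1 k) ^ n) * u ^ n)"
    unfolding Su split lo using X hi by (intro pm_add)
  have fac: "1 - eps + of_nat i = of_int (int (n * (i + 1)) - int p) / of_nat n" for i
    unfolding eps_def using n3 by (simp add: field_simps)
  have ndv: "\<not> int p dvd (int (n * (i + 1)) - int p)" if "i < s" for i
  proof
    assume "int p dvd (int (n * (i + 1)) - int p)"
    moreover have "int (n * (i + 1)) = (int (n * (i + 1)) - int p) + int p" by simp
    ultimately have "int p dvd int (n * (i + 1))" by (metis dvd_add dvd_refl)
    then have "p dvd n * (i + 1)" by (metis of_nat_dvd_iff)
    then have "p dvd n \<or> p dvd (i + 1)" using prime_p prime_dvd_mult_iff by blast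
    then show False using that sp np n3 by (auto dest: dvd_imp_le)
  qed
  have u0: "u \<noteq> 0"
  proof -
    have "1 - eps + of_nat i \<noteq> 0" if "i < s" for i
    proof
      assume "1 - eps + of_nat i = 0"
      then have "of_int (int (n * (i + 1)) - int p) / (of_nat n :: rat) = 0" unfolding fac .
      moreover have "(of_nat n :: rat) \<noteq> 0" using n3 by simp
      ultimately have "(of_int (int (n * (i + 1)) - int p) :: rat) = 0" by simp
      then have "(int (n * (i + 1)) - int p) = 0" by (simp only: of_int_eq_0_iff)
      then show False using ndv[OF that] by simp
    qed
    then show ?thesis unfolding u_def pochhammer_prod by (simp add: prod_zero_iff)
  qed
  have ui: "pint p (1 / u)"
    unfolding u_def pochhammer_prod
  proof (intro pint_inv_prod)
    fix i assume "i \<in> {0..<s}"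
    then have "\<not> int p dvd (int (n * (i + 1)) - int p)" using ndv by auto
    then have "pint p (of_int (int n) / of_int (int (n * (i + 1)) - int p))" by (rule pint_div_int)
    then show "pint p (1 / (1 - eps + of_nat i))" unfolding fac using n3 by simp
  qed
  have "(\<Sum>k<p. (pochhammer a k) ^ n / (pochhammer 1 k) ^ n) = ((\<Sum>k<p. (pochhammer a k) ^ n / (pochhammer 1 k) ^ n) * u ^ n) * (1 / u) ^ n"
    using u0 by (rule cancel_aux)
  moreover have "pm p 3 (((\<Sum>k<p. (pochhammer a k) ^ n / (pochhammer 1 k) ^ n) * u ^ n) * (1 / u) ^ n)"
    using Sun pint_power[OF ui] by (rule pm_mult_pint)
  ultimately have "pm p 3 (\<Sum>k<p. (pochhammer a k) ^ n / (pochhammer 1 k) ^ n)" by (simp only:)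
  then show ?thesis unfolding a_def eps_def .
qed

end

theorem theorem1p1:
  fixes n q p :: nat
  assumes "n > 2" and "q > 0" and "even n \<or> odd q"
    and "prime p" and "p > max n ((q - 1) * n + 1)"
  shows "rat_cong_pow
           (\<Sum>k<p. (pochhammer (of_nat q - of_nat p / of_nat n :: rat) k) ^ n
                    / (pochhammer (1 :: rat) k) ^ n)
           0 (int p) 3"
proof -
  interpret pl p using assms(4) by unfold_locales
  let ?S = "(\<Sum>k<p. (pochhammer (of_nat q - of_nat p / of_nat n :: rat) k) ^ n / (pochhammer (1 :: rat) k) ^ n)"
  have "pm p 3 ?S" using main_pm assms by blast
  then obtain y where y: "pint p y" "?S = of_nat p ^ 3 * y" unfolding pm_iff by blast
  then obtain a b :: int where ab: "b \<noteq> 0" "\<not> int p dvd b" "y = of_int a / of_int b" unfolding pint_def by blast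
  have "?S - 0 = of_int (int p ^ 3 * a) / of_int b" using y(2) ab(3) by simp
  then show ?thesis unfolding rat_cong_pow_def using ab by (intro exI[of _ "int p ^ 3 * a"] exI[of _ b]) auto
qed

end
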